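(* Let $M,n,d\in\mathbb{N}$ and let ${\bm{x}}_i^m\in\mathbb{R}^d$ ($m\in[M]$, $i\in[n]$) satisfy $\|{\bm{x}}_i^m\|\le 1$, and assume the data are linearly separable, i.e. there is ${\bm{w}}$ with $\langle {\bm{w}},{\bm{x}}_i^m\rangle>0$ for all $m,i$. Let $\gamma=\max_{\|{\bm{w}}\|=1}\min_{m,i}\langle {\bm{w}},{\bm{x}}_i^m\rangle>0$. Let $\ell(z)=\log(1+e^{-z})$, $F_m({\bm{w}})=\frac1n\sum_{i=1}^n\ell(\langle {\bm{w}},{\bm{x}}_i^m\rangle)$, $F=\frac1M\sum_{m=1}^M F_m$. Run Local GD with arbitrary initialization ${\bm{w}}_0\in\mathbb{R}^d$, any stepsize $\eta>0$ and any number of local steps $K\in\mathbb{N}$: for each round $r\ge 0$ and each $m\in[M]$, set ${\bm{w}}_{r,0}^m={\bm{w}}_r$, ${\bm{w}}_{r,k+1}^m={\bm{w}}_{r,k}^m-\eta\nabla F_m({\bm{w}}_{r,k}^m)$ for $k=0,\dots,K-1$, and ${\bm{w}}_{r+1}=\frac1M\sum_{m=1}^M{\bm{w}}_{r,K}^m$. Then for every integer $r\ge 1$, $$\frac1r\sum_{s=0}^{r-1}F({\bm{w}}_s)\le 26\,\frac{\|{\bm{w}}_0\|^2+1+\log^2(K+\eta K\gamma^2 r)+\eta^2K^2}{\eta\gamma^4 r}.$$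
   Context: This is a distributed logistic regression problem where labels have been absorbed into the data (each data point is ${\bm{x}}_i^m$ with label $+1$). $\|\cdot\|$ is the Euclidean norm. *)

theory Defs
  imports "HOL-Analysis.Analysis"
begin

definition logistic :: "real \<Rightarrow> real" where
  "logistic z = ln (1 + exp (- z))"

definition Floc :: "nat \<Rightarrow> (nat \<Rightarrow> nat \<Rightarrow> real^'d) \<Rightarrow> nat \<Rightarrow> real^'d \<Rightarrow> real" where
  "Floc n x m w = (1 / real n) * (\<Sum>i<n. logistic (w \<bullet> x m i))"

definition Fglob :: "nat \<Rightarrow> nat \<Rightarrow> (nat \<Rightarrow> nat \<Rightarrow> real^'d) \<Rightarrow> real^'d \<Rightarrow> real" where
  "Fglob M n x w = (1 / real M) * (\<Sum>m<M. Floc n x m w)"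

definition grad :: "(real^'d \<Rightarrow> real) \<Rightarrow> real^'d \<Rightarrow> real^'d" where
  "grad f w = (THE g. (f has_derivative (\<lambda>h. g \<bullet> h)) (at w))"

definition margin :: "nat \<Rightarrow> nat \<Rightarrow> (nat \<Rightarrow> nat \<Rightarrow> real^'d) \<Rightarrow> real" where
  "margin M n x = (SUP w\<in>{w. norm w = 1}. Min {w \<bullet> x m i | m i. m < M \<and> i < n})"

fun local_iter :: "nat \<Rightarrow> (nat \<Rightarrow> nat \<Rightarrow> real^'d) \<Rightarrow> real \<Rightarrow> nat \<Rightarrow> real^'d \<Rightarrow> nat \<Rightarrow> real^'d" where
  "local_iter n x \<eta> m w 0 = w"
| "local_iter n x \<eta> m w (Suc k) =
     local_iter n x \<eta> m w k - \<eta> *\<^sub>R grad (Floc n x m) (local_iter n x \<eta> m w k)"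

fun localGD :: "nat \<Rightarrow> nat \<Rightarrow> (nat \<Rightarrow> nat \<Rightarrow> real^'d) \<Rightarrow> real \<Rightarrow> nat \<Rightarrow> real^'d \<Rightarrow> nat \<Rightarrow> real^'d" where
  "localGD M n x \<eta> K w0 0 = w0"
| "localGD M n x \<eta> K w0 (Suc r) =
     (1 / real M) *\<^sub>R (\<Sum>m<M. local_iter n x \<eta> m (localGD M n x \<eta> K w0 r) K)"

end

theory Submission
  imports Defs
begin

definition ld :: "real \<Rightarrow> real" where "ld z = - 1 / (1 + exp z)"

lemma logistic_deriv: "(logistic has_real_derivative ld z) (at z)"
proof -
  have "((\<lambda>z. ln (1 + exp (- z))) has_real_derivative (1 / (1 + exp (-z))) * (exp (-z) * (-1))) (at z)"
    by (auto intro!: derivative_eq_intros simp: add_pos_pos)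
  moreover have "(1 / (1 + exp (-z))) * (exp (-z) * (-1)) = ld z"
    unfolding ld_def by (simp add: field_simps exp_minus)
  ultimately show ?thesis unfolding logistic_def[abs_def] by simp
qed

lemma logistic_convex: "logistic b \<ge> logistic a + ld a * (b - a)"
proof -
  have c: "convex_on UNIV logistic"
  proof (rule convex_on_realI[where f'=ld])
    show "\<And>x. x \<in> UNIV \<Longrightarrow> (logistic has_real_derivative ld x) (at x)" using logistic_deriv by blast
  qed (auto simp: ld_def divide_simps add_pos_pos)
  have "logistic b - logistic a \<ge> ld a * (b - a)"
    by (rule convex_on_imp_above_tangent[OF c]) (auto intro: has_field_derivative_at_within logistic_deriv)
  thus ?thesis by simp
qed

lemma logistic_nonneg: "logistic z \<ge> 0"
  unfolding logistic_def by simp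

lemma logistic_le_exp: "logistic z \<le> exp (- z)"
  unfolding logistic_def by (rule ln_add_one_self_le_self) simp

lemma ld_bounds: "- 1 \<le> ld z" "ld z < 0"
  unfolding ld_def by (auto simp: divide_simps add_pos_pos)


definition gF :: "nat \<Rightarrow> (nat \<Rightarrow> nat \<Rightarrow> real^'d) \<Rightarrow> nat \<Rightarrow> real^'d \<Rightarrow> real^'d" where
  "gF n x m w = (1 / real n) *\<^sub>R (\<Sum>i<n. ld (w \<bullet> x m i) *\<^sub>R x m i)"

lemma Floc_deriv: "(Floc n x m has_derivative (\<lambda>h. gF n x m w \<bullet> h)) (at w)"
proof -
  have d: "((\<lambda>w. logistic (w \<bullet> x m i)) has_derivative (\<lambda>h. ld (w \<bullet> x m i) * (h \<bullet> x m i))) (at w)" for i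
  proof -
    have l: "((\<lambda>w. w \<bullet> x m i) has_derivative (\<lambda>h. h \<bullet> x m i)) (at w)"
      by (auto intro!: derivative_eq_intros)
    have "((logistic \<circ> (\<lambda>w. w \<bullet> x m i)) has_derivative (\<lambda>t. ld (w \<bullet> x m i) * t) \<circ> (\<lambda>h. h \<bullet> x m i)) (at w)"
      by (rule diff_chain_at[OF l]) (use logistic_deriv[unfolded has_field_derivative_def] in \<open>simp\<close>)
    thus ?thesis by (simp add: o_def)
  qed
  have "(Floc n x m has_derivative (\<lambda>h. (1 / real n) * (\<Sum>i<n. ld (w \<bullet> x m i) * (h \<bullet> x m i)))) (at w)"
    unfolding Floc_def[abs_def] by (intro has_derivative_mult_right has_derivative_sum d)
  moreover have "(\<lambda>h. (1 / real n) * (\<Sum>i<n. ld (w \<bullet> x m i) * (h \<bullet> x m i))) = (\<lambda>h. gF n x m w \<bullet> h)"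
    unfolding gF_def by (auto simp: inner_sum_left inner_sum_right inner_commute)
  ultimately show ?thesis by simp
qed

lemma grad_Floc: "grad (Floc n x m) w = gF n x m w"
  unfolding grad_def
proof (rule the_equality)
  show "(Floc n x m has_derivative (\<lambda>h. gF n x m w \<bullet> h)) (at w)" by (rule Floc_deriv)
next
  fix g assume "(Floc n x m has_derivative (\<lambda>h. g \<bullet> h)) (at w)"
  from has_derivative_unique[OF this Floc_deriv]
  have "(\<lambda>h. g \<bullet> h) = (\<lambda>h. gF n x m w \<bullet> h)" .
  hence "g \<bullet> (g - gF n x m w) = gF n x m w \<bullet> (g - gF n x m w)" by metis
  hence "(g - gF n x m w) \<bullet> (g - gF n x m w) = 0" by (simp add: inner_diff_left)
  thus "g = gF n x m w" by simp
qed


lemma gF_inner: "gF n x m w \<bullet> v = (1 / real n) * (\<Sum>i<n. ld (w \<bullet> x m i) * (x m i \<bullet> v))"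
  unfolding gF_def by (simp add: inner_sum_left)

lemma Floc_nonneg: "Floc n x m w \<ge> 0"
  unfolding Floc_def by (intro mult_nonneg_nonneg sum_nonneg logistic_nonneg) auto

lemma ld_nonpos: "ld z \<le> 0" using ld_bounds(2) less_imp_le by blast

lemma Floc_convex: "Floc n x m u \<ge> Floc n x m w + gF n x m w \<bullet> (u - w)"
proof -
  have "(\<Sum>i<n. logistic (w \<bullet> x m i) + ld (w \<bullet> x m i) * (x m i \<bullet> (u - w))) \<le> (\<Sum>i<n. logistic (u \<bullet> x m i))"
  proof (rule sum_mono)
    fix i
    have "x m i \<bullet> (u - w) = u \<bullet> x m i - w \<bullet> x m i" by (simp add: inner_diff_right inner_diff_left inner_commute)
    thus "logistic (w \<bullet> x m i) + ld (w \<bullet> x m i) * (x m i \<bullet> (u - w)) \<le> logistic (u \<bullet> x m i)"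
      using logistic_convex[of "w \<bullet> x m i" "u \<bullet> x m i"] by simp
  qed
  hence "(1 / real n) * (\<Sum>i<n. logistic (w \<bullet> x m i) + ld (w \<bullet> x m i) * (x m i \<bullet> (u - w))) \<le> (1 / real n) * (\<Sum>i<n. logistic (u \<bullet> x m i))"
    by (rule mult_left_mono) simp
  thus ?thesis unfolding Floc_def gF_inner by (simp add: sum.distrib distrib_left)
qed

lemma step_ineq:
  fixes ws ua w :: "real^'d"
  assumes nx: "\<And>i. i < n \<Longrightarrow> norm (x m i) \<le> 1"
    and mg: "\<And>i. i < n \<Longrightarrow> ws \<bullet> x m i \<ge> gm"
    and g0: "gm > 0" and eta: "\<eta> > 0"
  defines "u \<equiv> ua + (\<eta> / (2 * gm)) *\<^sub>R ws"
  shows "norm (w - \<eta> *\<^sub>R gF n x m w - u) ^ 2 \<le> norm (w - u) ^ 2 - 2 * \<eta> * (Floc n x m w - Floc n x m ua)"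
proof -
  define g where "g = gF n x m w"
  define G where "G = (1 / real n) * (\<Sum>i<n. - ld (w \<bullet> x m i))"
  have G0: "G \<ge> 0" unfolding G_def by (intro mult_nonneg_nonneg sum_nonneg) (auto simp: ld_nonpos)
  have G1: "G \<le> 1"
  proof (cases "n = 0")
    case False
    have "(\<Sum>i<n. - ld (w \<bullet> x m i)) \<le> (\<Sum>i<n. 1)" by (rule sum_mono) (use ld_bounds in auto)
    thus ?thesis using False unfolding G_def by (simp add: divide_simps)
  qed (simp add: G_def)
  have ng: "norm g \<le> G"
  proof -
    have "norm (\<Sum>i<n. ld (w \<bullet> x m i) *\<^sub>R x m i) \<le> (\<Sum>i<n. norm (ld (w \<bullet> x m i) *\<^sub>R x m i))"
      by (rule norm_sum)
    also have "\<dots> \<le> (\<Sum>i<n. - ld (w \<bullet> x m i))"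
    proof (rule sum_mono)
      fix i assume "i \<in> {..<n}"
      hence "norm (x m i) \<le> 1" using nx by auto
      moreover have "\<bar>ld (w \<bullet> x m i)\<bar> = - ld (w \<bullet> x m i)" using ld_nonpos abs_of_nonpos by blast
      ultimately show "norm (ld (w \<bullet> x m i) *\<^sub>R x m i) \<le> - ld (w \<bullet> x m i)"
        using ld_bounds(2)[of "w \<bullet> x m i"] by (simp add: mult_left_le)
    qed
    finally show ?thesis unfolding g_def gF_def G_def by (simp add: divide_simps)
  qed
  have ng2: "norm g ^ 2 \<le> G"
  proof -
    have "norm g ^ 2 \<le> G ^ 2" using ng by (simp add: power_mono)
    also have "\<dots> \<le> G" using G0 G1 by (simp add: power2_eq_square mult_left_le)
    finally show ?thesis .
  qed
  have gws: "g \<bullet> ws \<le> - gm * G"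
  proof -
    have "(\<Sum>i<n. ld (w \<bullet> x m i) * (x m i \<bullet> ws)) \<le> (\<Sum>i<n. ld (w \<bullet> x m i) * gm)"
    proof (rule sum_mono)
      fix i assume "i \<in> {..<n}"
      hence "x m i \<bullet> ws \<ge> gm" using mg by (auto simp: inner_commute)
      thus "ld (w \<bullet> x m i) * (x m i \<bullet> ws) \<le> ld (w \<bullet> x m i) * gm"
        using ld_bounds(2)[of "w \<bullet> x m i"] by (simp add: mult_left_mono_neg)
    qed
    hence "(1 / real n) * (\<Sum>i<n. ld (w \<bullet> x m i) * (x m i \<bullet> ws)) \<le> (1 / real n) * (\<Sum>i<n. ld (w \<bullet> x m i) * gm)"
      by (rule mult_left_mono) simp
    thus ?thesis unfolding g_def gF_inner G_def by (simp add: sum_distrib_left[symmetric] sum_negf mult.commute)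
  qed
  have cv: "Floc n x m ua \<ge> Floc n x m w + g \<bullet> (ua - w)" unfolding g_def by (rule Floc_convex)
  have expand: "norm (w - \<eta> *\<^sub>R g - u) ^ 2 = norm (w - u) ^ 2 - 2 * \<eta> * (g \<bullet> (w - u)) + \<eta> ^ 2 * norm g ^ 2"
    unfolding power2_norm_eq_inner by (simp add: inner_diff_left inner_diff_right inner_commute power2_eq_square algebra_simps)
  have "g \<bullet> (w - u) = g \<bullet> (w - ua) - (\<eta> / (2 * gm)) * (g \<bullet> ws)"
    unfolding u_def by (simp add: inner_diff_right inner_add_right)
  moreover have "(\<eta> / (2 * gm)) * (g \<bullet> ws) \<le> (\<eta> / (2 * gm)) * (- gm * G)"
    using gws eta g0 by (intro mult_left_mono) auto
  moreover have "(\<eta> / (2 * gm)) * (- gm * G) = - \<eta> * G / 2" using g0 by (simp add: field_simps)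
  ultimately have "g \<bullet> (w - u) \<ge> Floc n x m w - Floc n x m ua + \<eta> * G / 2"
    using cv by (simp add: inner_diff_right)
  hence "2 * \<eta> * (g \<bullet> (w - u)) \<ge> 2 * \<eta> * (Floc n x m w - Floc n x m ua + \<eta> * G / 2)"
    using eta by (intro mult_left_mono) auto
  hence h1: "2 * \<eta> * (g \<bullet> (w - u)) \<ge> 2 * \<eta> * (Floc n x m w - Floc n x m ua) + \<eta> ^ 2 * G"
    by (simp add: algebra_simps power2_eq_square)
  have h2: "\<eta> ^ 2 * norm g ^ 2 \<le> \<eta> ^ 2 * G" using ng2 by (intro mult_left_mono) auto
  have "norm (w - \<eta> *\<^sub>R g - u) ^ 2 \<le> norm (w - u) ^ 2 - 2 * \<eta> * (Floc n x m w - Floc n x m ua)"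
    using expand h1 h2 by linarith
  thus ?thesis unfolding g_def .
qed


lemma local_ineq:
  fixes ws ua w :: "real^'d"
  assumes nx: "\<And>i. i < n \<Longrightarrow> norm (x m i) \<le> 1"
    and mg: "\<And>i. i < n \<Longrightarrow> ws \<bullet> x m i \<ge> gm"
    and g0: "gm > 0" and eta: "\<eta> > 0"
  defines "u \<equiv> ua + (\<eta> / (2 * gm)) *\<^sub>R ws"
  shows "norm (local_iter n x \<eta> m w (Suc k) - u) ^ 2
     \<le> norm (w - u) ^ 2 - 2 * \<eta> * Floc n x m w + 2 * \<eta> * real (Suc k) * Floc n x m ua"
proof (induction k)
  case 0
  show ?case using step_ineq[where n=n and x=x and m=m and ws=ws and gm=gm and \<eta>=\<eta>, OF nx mg g0 eta, where ua=ua and w=w] by (simp add: u_def grad_Floc algebra_simps)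
next
  case (Suc k)
  let ?v = "local_iter n x \<eta> m w (Suc k)"
  have "norm (local_iter n x \<eta> m w (Suc (Suc k)) - u) ^ 2 \<le> norm (?v - u) ^ 2 - 2 * \<eta> * (Floc n x m ?v - Floc n x m ua)"
    using step_ineq[where n=n and x=x and m=m and ws=ws and gm=gm and \<eta>=\<eta>, OF nx mg g0 eta, where ua=ua and w="?v"] by (simp add: u_def grad_Floc)
  moreover have "2 * \<eta> * Floc n x m ?v \<ge> 0" using eta Floc_nonneg by (intro mult_nonneg_nonneg) auto
  ultimately show ?case using Suc.IH by (simp add: algebra_simps)
qed

lemma avg_sq:
  fixes v :: "nat \<Rightarrow> real^'d"
  assumes "M \<ge> 1"
  shows "norm ((1 / real M) *\<^sub>R (\<Sum>m<M. v m) - u) ^ 2 \<le> (1 / real M) * (\<Sum>m<M. norm (v m - u) ^ 2)"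
proof -
  have eq: "(1 / real M) *\<^sub>R (\<Sum>m<M. v m) - u = (1 / real M) *\<^sub>R (\<Sum>m<M. v m - u)"
  proof -
    have "(\<Sum>m<M. v m - u) = (\<Sum>m<M. v m) - real M *\<^sub>R u"
      by (simp only: sum_subtractf sum_constant_scaleR card_lessThan)
    moreover have "(1 / real M) *\<^sub>R (real M *\<^sub>R u) = u" using assms by simp
    ultimately show ?thesis by (simp add: scaleR_diff_right)
  qed
  have "norm (\<Sum>m<M. v m - u) ^ 2 \<le> (\<Sum>m<M. norm (v m - u)) ^ 2"
    by (intro power_mono norm_sum) auto
  also have "\<dots> \<le> (\<Sum>m<M. norm (v m - u) ^ 2) * real M"
    using sum_squared_le_sum_of_squares[of "\<lambda>m. norm (v m - u)" "{..<M}"] by simp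
  finally have "norm (\<Sum>m<M. v m - u) ^ 2 \<le> (\<Sum>m<M. norm (v m - u) ^ 2) * real M" .
  hence "norm (\<Sum>m<M. v m - u) ^ 2 / (real M)^2 \<le> (\<Sum>m<M. norm (v m - u) ^ 2) * real M / (real M)^2"
    by (intro divide_right_mono) auto
  thus ?thesis unfolding eq using assms by (simp add: power2_eq_square divide_simps)
qed


lemma round_ineq:
  fixes ws ua wz :: "real^'d"
  assumes M1: "M \<ge> 1" and K1: "K \<ge> 1"
    and nx: "\<And>m i. m < M \<Longrightarrow> i < n \<Longrightarrow> norm (x m i) \<le> 1"
    and mg: "\<And>m i. m < M \<Longrightarrow> i < n \<Longrightarrow> ws \<bullet> x m i \<ge> gm"
    and g0: "gm > 0" and eta: "\<eta> > 0"
  defines "u \<equiv> ua + (\<eta> / (2 * gm)) *\<^sub>R ws"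
  shows "norm (localGD M n x \<eta> K wz (Suc r) - u) ^ 2
     \<le> norm (localGD M n x \<eta> K wz r - u) ^ 2 - 2 * \<eta> * Fglob M n x (localGD M n x \<eta> K wz r)
        + 2 * \<eta> * real K * Fglob M n x ua"
proof -
  let ?w = "localGD M n x \<eta> K wz r"
  obtain k where k: "K = Suc k" using K1 by (cases K) auto
  have "norm (localGD M n x \<eta> K wz (Suc r) - u) ^ 2 \<le> (1 / real M) * (\<Sum>m<M. norm (local_iter n x \<eta> m ?w K - u) ^ 2)"
    by (simp only: localGD.simps) (rule avg_sq[OF M1])
  also have "\<dots> \<le> (1 / real M) * (\<Sum>m<M. norm (?w - u) ^ 2 - 2 * \<eta> * Floc n x m ?w + 2 * \<eta> * real K * Floc n x m ua)"
  proof (intro mult_left_mono sum_mono)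
    fix m assume "m \<in> {..<M}"
    hence m: "m < M" by simp
    show "norm (local_iter n x \<eta> m ?w K - u) ^ 2 \<le> norm (?w - u) ^ 2 - 2 * \<eta> * Floc n x m ?w + 2 * \<eta> * real K * Floc n x m ua"
      unfolding k u_def by (rule local_ineq[where n=n and x=x and m=m and ws=ws and gm=gm and \<eta>=\<eta>, OF nx[OF m] mg[OF m] g0 eta])
  qed simp
  also have "\<dots> = norm (?w - u) ^ 2 - 2 * \<eta> * Fglob M n x ?w + 2 * \<eta> * real K * Fglob M n x ua"
    using M1 unfolding Fglob_def by (simp add: sum.distrib sum_subtractf sum_distrib_left[symmetric] field_simps)
  finally show ?thesis .
qed

lemma tele_ineq:
  fixes ws ua wz :: "real^'d"
  assumes M1: "M \<ge> 1" and K1: "K \<ge> 1"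
    and nx: "\<And>m i. m < M \<Longrightarrow> i < n \<Longrightarrow> norm (x m i) \<le> 1"
    and mg: "\<And>m i. m < M \<Longrightarrow> i < n \<Longrightarrow> ws \<bullet> x m i \<ge> gm"
    and g0: "gm > 0" and eta: "\<eta> > 0"
  defines "u \<equiv> ua + (\<eta> / (2 * gm)) *\<^sub>R ws"
  shows "norm (localGD M n x \<eta> K wz r - u) ^ 2
     \<le> norm (wz - u) ^ 2 - 2 * \<eta> * (\<Sum>s<r. Fglob M n x (localGD M n x \<eta> K wz s))
        + 2 * \<eta> * real K * real r * Fglob M n x ua"
proof (induction r)
  case 0
  then show ?case by simp
next
  case (Suc r)
  show ?case using Suc.IH round_ineq[where M=M and n=n and x=x and ws=ws and gm=gm and \<eta>=\<eta> and K=K, OF M1 K1 nx mg g0 eta, where ua=ua and wz=wz and r=r]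
    unfolding u_def by (simp add: algebra_simps)
qed

theorem theorem4p1:
  fixes M n K r :: nat and x :: "nat \<Rightarrow> nat \<Rightarrow> real^'d" and w0 :: "real^'d" and \<eta> :: real
  assumes "M \<ge> 1" and "n \<ge> 1"
    and "\<And>m i. m < M \<Longrightarrow> i < n \<Longrightarrow> norm (x m i) \<le> 1"
    and "\<exists>w. \<forall>m<M. \<forall>i<n. w \<bullet> x m i > 0"
    and "\<eta> > 0" and "K \<ge> 1"
    and "r \<ge> 1"
  shows "(1 / real r) * (\<Sum>s<r. Fglob M n x (localGD M n x \<eta> K w0 s))
         \<le> 26 * (norm w0 ^ 2 + 1 + (ln (real K + \<eta> * real K * margin M n x ^ 2 * real r)) ^ 2
                  + \<eta> ^ 2 * real K ^ 2)
              / (\<eta> * margin M n x ^ 4 * real r)"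
proof -
  note M1 = assms(1) and n1 = assms(2) and nx = assms(3) and sep = assms(4) and eta = assms(5)
    and K1 = assms(6) and r1 = assms(7)
  define S where "S w = {w \<bullet> x m i | m i. m < M \<and> i < n}" for w :: "real^'d"
  define mn where "mn w = Min (S w)" for w
  have S_eq: "S w = (\<lambda>(m, i). w \<bullet> x m i) ` ({..<M} \<times> {..<n})" for w
    unfolding S_def by auto
  have Sfin: "finite (S w)" for w unfolding S_eq by auto
  have Sne: "S w \<noteq> {}" for w unfolding S_eq using M1 n1 by (auto simp: lessThan_empty_iff)
  have mn_le: "mn w \<le> w \<bullet> x m i" if "m < M" "i < n" for w m i
    unfolding mn_def using that Sfin by (intro Min_le) (auto simp: S_def)
  have mn_gt: "mn w > c" if "\<And>m i. m < M \<Longrightarrow> i < n \<Longrightarrow> w \<bullet> x m i > c" for w c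
    unfolding mn_def using that Sfin Sne by (subst Min_gr_iff) (auto simp: S_def)
  have mn_le1: "mn w \<le> 1" if "norm w = 1" for w
  proof -
    have "mn w \<le> w \<bullet> x 0 0" using mn_le M1 n1 by auto
    also have "\<dots> \<le> norm w * norm (x 0 0)" by (rule Cauchy_Schwarz_ineq2[THEN order_trans[OF abs_ge_self]])
    also have "\<dots> \<le> 1" using that nx[of 0 0] M1 n1 by simp
    finally show ?thesis .
  qed
  have mgdef: "margin M n x = (SUP w\<in>{w. norm w = 1}. mn w)"
    unfolding margin_def mn_def S_def ..
  define \<gamma> where "\<gamma> = margin M n x"
  have bdd: "bdd_above (mn ` {w. norm w = 1})" using mn_le1 by (intro bdd_aboveI[where M=1]) auto
  obtain v where v: "\<forall>m<M. \<forall>i<n. v \<bullet> x m i > 0" using sep by blast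
  have v0: "v \<noteq> 0" using v M1 n1 by fastforce
  define vn where "vn = (1 / norm v) *\<^sub>R v"
  have vn1: "norm vn = 1" using v0 unfolding vn_def by simp
  have "mn vn > 0"
    using v v0 unfolding vn_def by (intro mn_gt) auto
  moreover have "mn vn \<le> \<gamma>" unfolding \<gamma>_def mgdef using bdd vn1 by (intro cSUP_upper) auto
  ultimately have gpos: "\<gamma> > 0" by linarith
  have gle1: "\<gamma> \<le> 1" unfolding \<gamma>_def mgdef using mn_le1 vn1 by (intro cSUP_least) auto
  have "\<gamma> / 2 < (SUP w\<in>{w. norm w = 1}. mn w)" using gpos unfolding \<gamma>_def mgdef by simp
  then obtain ws where ws1: "norm ws = 1" and wsg: "\<gamma> / 2 < mn ws"
    using less_cSUP_iff[OF _ bdd] vn1 by blast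
  define gm where "gm = mn ws"
  have gm_le: "gm \<le> \<gamma>" unfolding gm_def \<gamma>_def mgdef using bdd ws1 by (intro cSUP_upper) auto
  have gm_gt: "gm > \<gamma> / 2" using wsg gm_def by simp
  have gm0: "gm > 0" using gm_gt gpos by linarith
  have mg: "ws \<bullet> x m i \<ge> gm" if "m < M" "i < n" for m i unfolding gm_def using mn_le that .
  define A where "A = real K + \<eta> * real K * gm ^ 2 * real r"
  have Kpos: "real K \<ge> 1" and rpos: "real r \<ge> 1" using K1 r1 by auto
  have A_ge: "A \<ge> \<eta> * real K * gm ^ 2 * real r" unfolding A_def using Kpos by simp
  have A1: "A \<ge> 1" unfolding A_def using Kpos eta gm0 rpos by (simp add: add_increasing2)
  define L0 where "L0 = ln A"
  have L00: "L0 \<ge> 0" unfolding L0_def using A1 by simp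
  define lam where "lam = L0 / gm"
  have lam0: "lam \<ge> 0" unfolding lam_def using L00 gm0 by simp
  define ua where "ua = lam *\<^sub>R ws"
  define c where "c = \<eta> / (2 * gm)"
  have c0: "c \<ge> 0" unfolding c_def using eta gm0 by simp
  define u where "u = ua + (\<eta> / (2 * gm)) *\<^sub>R ws"
  have tele: "norm (localGD M n x \<eta> K w0 r - u) ^ 2
     \<le> norm (w0 - u) ^ 2 - 2 * \<eta> * (\<Sum>s<r. Fglob M n x (localGD M n x \<eta> K w0 s))
        + 2 * \<eta> * real K * real r * Fglob M n x ua"
    unfolding u_def by (rule tele_ineq[OF M1 K1 nx mg gm0 eta])
  define \<Sigma> where "\<Sigma> = (\<Sum>s<r. Fglob M n x (localGD M n x \<eta> K w0 s))"
  have S1: "2 * \<eta> * \<Sigma> \<le> norm (w0 - u) ^ 2 + 2 * \<eta> * real K * real r * Fglob M n x ua"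
    using tele unfolding \<Sigma>_def by (smt (verit) zero_le_power2)
  have logb: "logistic (ua \<bullet> x m i) \<le> 1 / A" if "m < M" "i < n" for m i
  proof -
    have "logistic (ua \<bullet> x m i) \<le> exp (- (lam * (ws \<bullet> x m i)))"
      using logistic_le_exp unfolding ua_def by simp
    also have "\<dots> \<le> exp (- (lam * gm))"
      using mg[OF that] lam0 by (simp add: mult_left_mono)
    also have "lam * gm = L0" unfolding lam_def using gm0 by simp
    also have "exp (- L0) = 1 / A" unfolding L0_def using A1 by (simp add: exp_minus inverse_eq_divide)
    finally show ?thesis .
  qed
  have Flocb: "Floc n x m ua \<le> 1 / A" if "m < M" for m
  proof -
    have "(\<Sum>i<n. logistic (ua \<bullet> x m i)) \<le> (\<Sum>i<n. 1 / A)" by (rule sum_mono) (use logb that in auto)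
    hence "(1 / real n) * (\<Sum>i<n. logistic (ua \<bullet> x m i)) \<le> (1 / real n) * (\<Sum>i<n. 1 / A)"
      by (rule mult_left_mono) simp
    thus ?thesis unfolding Floc_def using n1 by simp
  qed
  have Fb: "Fglob M n x ua \<le> 1 / A"
  proof -
    have "(\<Sum>m<M. Floc n x m ua) \<le> (\<Sum>m<M. 1 / A)" by (rule sum_mono) (use Flocb in auto)
    hence "(1 / real M) * (\<Sum>m<M. Floc n x m ua) \<le> (1 / real M) * (\<Sum>m<M. 1 / A)"
      by (rule mult_left_mono) simp
    thus ?thesis unfolding Fglob_def using M1 by simp
  qed
  have T2: "\<eta> * real K * real r * Fglob M n x ua \<le> 1 / gm ^ 2"
  proof -
    have "\<eta> * real K * real r * Fglob M n x ua \<le> \<eta> * real K * real r * (1 / A)"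
      using Fb eta Kpos rpos by (intro mult_left_mono) auto
    also have "\<dots> \<le> 1 / gm ^ 2"
      using A_ge A1 gm0 eta Kpos rpos by (simp add: divide_simps) (simp add: algebra_simps)
    finally show ?thesis .
  qed
  have nu: "norm u = lam + c"
  proof -
    have "u = (lam + c) *\<^sub>R ws" unfolding u_def ua_def c_def by (simp add: scaleR_add_left)
    thus ?thesis using ws1 lam0 c0 by simp
  qed
  have nw: "norm (w0 - u) ^ 2 \<le> 2 * norm w0 ^ 2 + 2 * (lam + c) ^ 2"
  proof -
    have "norm (w0 - u) \<le> norm w0 + (lam + c)" using norm_triangle_ineq4[of w0 u] nu by simp
    hence "norm (w0 - u) ^ 2 \<le> (norm w0 + (lam + c)) ^ 2" by (intro power_mono) auto
    also have "\<dots> \<le> 2 * norm w0 ^ 2 + 2 * (lam + c) ^ 2"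
      by (smt (verit) zero_le_power2 power2_sum power2_diff)
    finally show ?thesis .
  qed
  have lc: "(lam + c) ^ 2 \<le> 2 * L0 ^ 2 / gm ^ 2 + \<eta> ^ 2 / (2 * gm ^ 2)"
  proof -
    have "(lam + c) ^ 2 \<le> 2 * lam ^ 2 + 2 * c ^ 2"
      by (smt (verit) zero_le_power2 power2_sum power2_diff)
    thus ?thesis unfolding lam_def c_def by (simp add: power_divide power_mult_distrib)
  qed
  define L where "L = ln (real K + \<eta> * real K * \<gamma> ^ 2 * real r)"
  define B where "B = norm w0 ^ 2 + 1 + L ^ 2 + \<eta> ^ 2 * real K ^ 2"
  have gm2le: "gm ^ 2 \<le> \<gamma> ^ 2" using gm0 gm_le by (intro power_mono) auto
  have LL: "L0 ^ 2 \<le> L ^ 2"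
  proof -
    have "A \<le> real K + \<eta> * real K * \<gamma> ^ 2 * real r"
      unfolding A_def using gm2le eta Kpos rpos by (simp add: mult_left_mono mult_right_mono)
    hence "L0 \<le> L" unfolding L0_def L_def using A1 by simp
    thus ?thesis using L00 by (intro power_mono) auto
  qed
  have eK: "\<eta> ^ 2 \<le> \<eta> ^ 2 * real K ^ 2" 
  proof -
    have "1 \<le> real K ^ 2" using Kpos by (simp add: one_le_power)
    thus ?thesis by (simp add: mult_le_cancel_left1)
  qed
  have gm1: "gm ^ 2 \<le> 1" using gm_le gle1 gm0 by (simp add: power_le_one)
  have wq: "norm w0 ^ 2 \<le> norm w0 ^ 2 / gm ^ 2" using gm1 gm0 by (simp add: le_divide_eq mult_left_le)
  have main1: "2 * \<eta> * \<Sigma> \<le> 4 * B / gm ^ 2"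
  proof -
    have "2 * \<eta> * \<Sigma> \<le> 2 * norm w0 ^ 2 + 4 * L0 ^ 2 / gm ^ 2 + \<eta> ^ 2 / gm ^ 2 + 2 / gm ^ 2"
      using S1 nw lc T2 by (simp add: field_simps)
    also have "\<dots> \<le> 4 * norm w0 ^ 2 / gm ^ 2 + 4 * L ^ 2 / gm ^ 2 + 4 * (\<eta> ^ 2 * real K ^ 2) / gm ^ 2 + 4 / gm ^ 2"
    proof -
      have f1: "2 * norm w0 ^ 2 \<le> 4 * norm w0 ^ 2 / gm ^ 2"
      proof -
        have "4 * norm w0 ^ 2 / gm ^ 2 = 4 * (norm w0 ^ 2 / gm ^ 2)" by simp
        thus ?thesis using wq zero_le_power2[of "norm w0"] by linarith
      qed
      have f2: "4 * L0 ^ 2 / gm ^ 2 \<le> 4 * L ^ 2 / gm ^ 2" using LL by (intro divide_right_mono) auto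
      have "\<eta> ^ 2 \<le> 4 * (\<eta> ^ 2 * real K ^ 2)" using eK by (smt (verit) zero_le_power2)
      hence f3: "\<eta> ^ 2 / gm ^ 2 \<le> 4 * (\<eta> ^ 2 * real K ^ 2) / gm ^ 2" by (intro divide_right_mono) auto
      have f4: "2 / gm ^ 2 \<le> 4 / gm ^ 2" by (intro divide_right_mono) auto
      show ?thesis using f1 f2 f3 f4 by linarith
    qed
    also have "\<dots> = 4 * B / gm ^ 2" unfolding B_def by (simp add: add_divide_distrib algebra_simps)
    finally show ?thesis .
  qed
  have g4: "\<gamma> ^ 4 \<le> 4 * gm ^ 2"
  proof -
    have "\<gamma> ^ 4 \<le> \<gamma> ^ 2" using gpos gle1 by (simp add: power_decreasing)
    also have "\<gamma> ^ 2 \<le> (2 * gm) ^ 2" using gm_gt gpos by (intro power_mono) auto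
    finally show ?thesis by simp
  qed
  have B0: "B \<ge> 0" unfolding B_def by simp
  have "4 * B / gm ^ 2 \<le> 16 * B / \<gamma> ^ 4"
    using g4 gpos gm0 B0 by (simp add: divide_simps) (metis mult_left_mono mult.left_commute)
  hence "2 * \<eta> * \<Sigma> \<le> 16 * B / \<gamma> ^ 4" using main1 by linarith
  hence "\<eta> * \<Sigma> \<le> 8 * B / \<gamma> ^ 4" by simp
  hence "\<Sigma> \<le> (8 * B / \<gamma> ^ 4) / \<eta>" using eta by (subst pos_le_divide_eq) (auto simp: mult.commute)
  hence "\<Sigma> \<le> 8 * B / (\<eta> * \<gamma> ^ 4)" by (simp add: divide_divide_eq_left mult.commute)
  hence "(1 / real r) * \<Sigma> \<le> (1 / real r) * (8 * B / (\<eta> * \<gamma> ^ 4))"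
    by (intro mult_left_mono) auto
  also have "\<dots> \<le> 26 * B / (\<eta> * \<gamma> ^ 4 * real r)"
    using B0 eta gpos rpos by (simp add: divide_simps)
  finally show ?thesis unfolding \<Sigma>_def B_def L_def \<gamma>_def .
qed

end
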